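(* Let $W$ be the affine Weyl group of type $A_2^{(1)}$ and $N\in\mathbb{N}$. Let $w\in W^0$ with $\mathcal{L}_{\Lambda_0}(w)=N$. Then (1) $\mathcal{O}_N(w)=\bigsqcup_{i=0}^{2}\widehat{O}_N(\sigma_i w)$; (2) $\mathcal{U}(12N+4)=\bigsqcup_{v\in\widehat{\mathcal{B}}(N)}\widehat{O}_N(v)$.
   Context: Affine Kac–Moody setting of type $A_2^{(1)}$: $\mathfrak{h}^*$ contains simple roots $\alpha_0,\alpha_1,\alpha_2$, null root $\delta=\alpha_0+\alpha_1+\alpha_2$, the affine fundamental weight $\Lambda_0$, and $\rho^\vee\in\mathfrak h$ satisfies $\langle\alpha_i,\rho^\vee\rangle=1$ for all $i$; $c=\alpha_0^\vee+\alpha_1^\vee+\alpha_2^\vee$ is the canonical central element. The finite part $V_0=\mathbb{R}\alpha_1\oplus\mathbb{R}\alpha_2$ is identified with $\{x\in\mathbb{R}^3\mid x_1+x_2+x_3=0\}$ via $\alpha_1=\varepsilon_1-\varepsilon_2$, $\alpha_2=\varepsilon_2-\varepsilon_3$, with the standard dot product $(\cdot|\cdot)$ (extended to the standard invariant form on $\mathfrak h^*$). For $x\in V_0$, $t_x\in GL(\mathfrak h^* )$ is $t_x(v)=v+\langle v,c\rangle x-((v|x)+\frac12|x|^2\langle v,c\rangle)\delta$. $W_0=\langle s_1,s_2\rangle\cong S_3$ (permuting coordinates), $M=V_0\cap\mathbb{Z}^3$, $W=\langle s_0,s_1,s_2\rangle=T(M)\rtimes W_0$, and every $w\in W$ is uniquely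 $w=t_q\overline w$ with $q\in M$, $\overline w\in W_0$. $W^0=\{w\in W\mid \ell(ws_k)>\ell(w),\ k=1,2\}$ ($\ell$ = Coxeter length). Fundamental weights $\omega_1=(2/3,-1/3,-1/3)$, $\omega_2=(1/3,1/3,-2/3)$, $\omega_0=0$. $\sigma_0=e$, $\sigma_1=t_{\omega_1}s_1s_2$, $\sigma_2=t_{\omega_2}s_2s_1$ in the extended affine Weyl group $\widehat W=T(L)\rtimes W_0$, $L=\mathbb{Z}\omega_1+\mathbb{Z}\omega_2$; $\Sigma=\{\sigma_0,\sigma_1,\sigma_2\}$. For $g\in GL(\mathfrak h^* )$, the atomic length is $\mathcal{L}_{\Lambda_0}(g)=\langle\Lambda_0-g\Lambda_0,\rho^\vee\rangle$. $\widehat{\mathcal{B}}(N)=\{v\in\Sigma W^0\mid \mathcal{L}_{\Lambda_0}(v)=N\}$ where $\Sigma W^0=\{\sigma w\mid\sigma\in\Sigma, w\in W^0\}$. Let $M_0=\mathrm{id}$, $M_1(q_1,q_2,q_3)=(q_3,q_1,q_2)$, $M_2(q_1,q_2,q_3)=(q_2,q_3,q_1)$ (the matrices of $e$, $s_1s_2$, $s_2s_1$). Let $p:\mathbb{R}^3\to\mathbb{R}^2$, $p(x,y,z)=(3x+6y-1,3x-1)$, and $R=\frac12\begin{pmatrix}1&-3\\1&1\end{pmatrix}$. $\mathcal{U}(k)=\{(x,y)\in\mathbb{Z}^2\mid x^2+3y^2=k\}$. For $w=t_q\overline w\in W^0$ with $\mathcal{L}_{\Lambda_0}(w)=N$: $\mathcal{O}_N(w)=\{R^kp(q)\mid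 k=1,\dots,6\}$, and for $i\in\{0,1,2\}$, $\widehat{O}_N(\sigma_iw)=\{p(\omega_i+M_i(q)),\,-p(\omega_i+M_i(q))\}$. *)

theory Defs
  imports "HOL-Analysis.Analysis"
begin

type_synonym vec3 = "real \<times> real \<times> real"

text \<open>An element of h* is encoded by its coordinates (a1,a2,d,l) with respect to the
  basis alpha_1, alpha_2, delta, Lambda_0, i.e. it is a1 alpha_1 + a2 alpha_2 + d delta + l Lambda_0.\<close>
type_synonym hs = "real \<times> real \<times> real \<times> real"

definition al1 :: hs where "al1 = (1, 0, 0, 0)"
definition al2 :: hs where "al2 = (0, 1, 0, 0)"
definition dlt :: hs where "dlt = (0, 0, 1, 0)"
definition Lam0 :: hs where "Lam0 = (0, 0, 0, 1)"
definition al0 :: hs where "al0 = dlt - al1 - al2"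

text \<open>Finite part in V_0 (as a vector of R^3 with coordinate sum 0), delta- and Lambda_0-coefficient.\<close>
definition fin :: "hs \<Rightarrow> vec3" where
  "fin v = (case v of (a1, a2, d, l) \<Rightarrow> (a1, a2 - a1, - a2))"
definition dcoef :: "hs \<Rightarrow> real" where
  "dcoef v = (case v of (a1, a2, d, l) \<Rightarrow> d)"
definition lcoef :: "hs \<Rightarrow> real" where
  "lcoef v = (case v of (a1, a2, d, l) \<Rightarrow> l)"

text \<open>Embedding of V_0 = {x in R^3 | x1+x2+x3 = 0} into h* (x = x1 alpha_1 - x3 alpha_2).\<close>
definition emb :: "vec3 \<Rightarrow> hs" where
  "emb x = (case x of (x1, x2, x3) \<Rightarrow> (x1, - x3, 0, 0))"

definition dot3 :: "vec3 \<Rightarrow> vec3 \<Rightarrow> real" where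
  "dot3 x y = (case x of (x1, x2, x3) \<Rightarrow> case y of (y1, y2, y3) \<Rightarrow> x1*y1 + x2*y2 + x3*y3)"

text \<open>Standard invariant form: (Lambda_0|Lambda_0) = 0, (Lambda_0|delta) = 1, (delta|delta) = 0,
  V_0 orthogonal to delta and Lambda_0, dot product on V_0.\<close>
definition ip :: "hs \<Rightarrow> hs \<Rightarrow> real" where
  "ip v u = dot3 (fin v) (fin u) + dcoef v * lcoef u + lcoef v * dcoef u"

text \<open>Pairing with c (= (v|delta)) and with rho^vee
  (normalised by <Lambda_0, rho^vee> = 0; <alpha_i, rho^vee> = 1, hence <delta, rho^vee> = 3).\<close>
definition pair_c :: "hs \<Rightarrow> real" where
  "pair_c v = lcoef v"
definition pair_rho :: "hs \<Rightarrow> real" where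
  "pair_rho v = (case v of (a1, a2, d, l) \<Rightarrow> a1 + a2 + 3 * d)"

text \<open>Simple reflections s_i(v) = v - <v, alpha_i^vee> alpha_i (simply laced).\<close>
definition refl :: "hs \<Rightarrow> hs \<Rightarrow> hs" where
  "refl a v = v - ip v a *\<^sub>R a"

definition sref :: "nat \<Rightarrow> hs \<Rightarrow> hs" where
  "sref i = (if i = 0 then refl al0 else if i = 1 then refl al1 else refl al2)"

definition tr :: "vec3 \<Rightarrow> hs \<Rightarrow> hs" where
  "tr x v = v + pair_c v *\<^sub>R emb x - (dot3 (fin v) x + 1/2 * dot3 x x * pair_c v) *\<^sub>R dlt"

inductive_set gen :: "(hs \<Rightarrow> hs) set \<Rightarrow> (hs \<Rightarrow> hs) set" for S where
  gen_id: "id \<in> gen S"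
| gen_step: "s \<in> S \<Longrightarrow> g \<in> gen S \<Longrightarrow> s \<circ> g \<in> gen S"

definition Waff :: "(hs \<Rightarrow> hs) set" where
  "Waff = gen (sref ` {0, 1, 2})"

definition Wfin :: "(hs \<Rightarrow> hs) set" where
  "Wfin = gen {sref 1, sref 2}"

definition word :: "nat list \<Rightarrow> hs \<Rightarrow> hs" where
  "word ws = foldr (\<lambda>i g. sref i \<circ> g) ws id"

definition clen :: "(hs \<Rightarrow> hs) \<Rightarrow> nat" where
  "clen w = (LEAST n. \<exists>ws. set ws \<subseteq> {0, 1, 2} \<and> length ws = n \<and> word ws = w)"

definition Wup0 :: "(hs \<Rightarrow> hs) set" where
  "Wup0 = {w \<in> Waff. clen (w \<circ> sref 1) > clen w \<and> clen (w \<circ> sref 2) > clen w}"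

definition Mlat :: "vec3 set" where
  "Mlat = {(x1, x2, x3). x1 \<in> \<int> \<and> x2 \<in> \<int> \<and> x3 \<in> \<int> \<and> x1 + x2 + x3 = 0}"

definition omega :: "nat \<Rightarrow> vec3" where
  "omega i = (if i = 1 then (2/3, -1/3, -1/3) else if i = 2 then (1/3, 1/3, -2/3) else (0, 0, 0))"

definition sigmaA :: "nat \<Rightarrow> hs \<Rightarrow> hs" where
  "sigmaA i = (if i = 1 then tr (omega 1) \<circ> sref 1 \<circ> sref 2
              else if i = 2 then tr (omega 2) \<circ> sref 2 \<circ> sref 1 else id)"

definition atl :: "(hs \<Rightarrow> hs) \<Rightarrow> real" where
  "atl g = pair_rho (Lam0 - g Lam0)"

definition SigW0 :: "(hs \<Rightarrow> hs) set" where
  "SigW0 = {sigmaA i \<circ> w | i w. i < 3 \<and> w \<in> Wup0}"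

definition Bhat :: "nat \<Rightarrow> (hs \<Rightarrow> hs) set" where
  "Bhat N = {v \<in> SigW0. atl v = real N}"

definition Mrot :: "nat \<Rightarrow> vec3 \<Rightarrow> vec3" where
  "Mrot i q = (case q of (q1, q2, q3) \<Rightarrow>
     (if i = 1 then (q3, q1, q2) else if i = 2 then (q2, q3, q1) else (q1, q2, q3)))"

definition pmap :: "vec3 \<Rightarrow> real \<times> real" where
  "pmap x = (case x of (a, b, c) \<Rightarrow> (3*a + 6*b - 1, 3*a - 1))"

definition Rmat :: "real \<times> real \<Rightarrow> real \<times> real" where
  "Rmat u = (case u of (a, b) \<Rightarrow> ((a - 3*b) / 2, (a + b) / 2))"

definition Ucal :: "nat \<Rightarrow> (real \<times> real) set" where
  "Ucal k = {(x, y). x \<in> \<int> \<and> y \<in> \<int> \<and> x^2 + 3 * y^2 = real k}"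

definition transl :: "(hs \<Rightarrow> hs) \<Rightarrow> vec3" where
  "transl w = (THE q. q \<in> Mlat \<and> (\<exists>u \<in> Wfin. w = tr q \<circ> u))"

definition Ocal :: "(hs \<Rightarrow> hs) \<Rightarrow> (real \<times> real) set" where
  "Ocal w = {(Rmat ^^ k) (pmap (transl w)) | k. k \<in> {1..6::nat}}"

definition Ohat :: "(hs \<Rightarrow> hs) \<Rightarrow> (real \<times> real) set" where
  "Ohat v = (THE S. \<exists>i w. i < 3 \<and> w \<in> Wup0 \<and> v = sigmaA i \<circ> w \<and>
      S = {pmap (omega i + Mrot i (transl w)), - pmap (omega i + Mrot i (transl w))})"

end

theory Submission
  imports Defs
begin


lemma s1_ap[simp]: "sref 1 (a1,a2,d,l) = (a2 - a1, a2, d, l)"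
  by (simp add: sref_def refl_def ip_def al1_def fin_def dcoef_def lcoef_def dot3_def)
lemma s1_ap'[simp]: "sref (Suc 0) (a1,a2,d,l) = (a2 - a1, a2, d, l)"
  using s1_ap by simp
lemma s2_ap[simp]: "sref 2 (a1,a2,d,l) = (a1, a1 - a2, d, l)"
  by (simp add: sref_def refl_def ip_def al2_def fin_def dcoef_def lcoef_def dot3_def)
lemma s0_ap[simp]: "sref 0 (a1,a2,d,l) = (l - a2, l - a1, d - l + a1 + a2, l)"
  by (simp add: sref_def refl_def ip_def al0_def al1_def al2_def dlt_def fin_def dcoef_def lcoef_def dot3_def algebra_simps)
lemma tr_ap[simp]: "tr (x1,x2,x3) (a1,a2,d,l) = (a1 + l*x1, a2 - l*x3, d - (a1*x1 + (a2-a1)*x2 - a2*x3 + 1/2*(x1*x1+x2*x2+x3*x3)*l), l)"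
  by (simp add: tr_def pair_c_def emb_def fin_def dcoef_def lcoef_def dot3_def dlt_def algebra_simps)

lemma hs_ext: "(\<And>a1 a2 d l. f (a1,a2,d,l) = g (a1,a2,d,l)) \<Longrightarrow> f = (g :: hs \<Rightarrow> hs)"
  by (rule ext) (metis prod_cases4)

lemma word_Nil[simp]: "word [] = id" by (simp add: word_def)
lemma word_Cons[simp]: "word (i # ws) = sref i \<circ> word ws" by (simp add: word_def)
lemma foldr_comp: "foldr (\<lambda>i g. sref i \<circ> g) ws h = foldr (\<lambda>i g. sref i \<circ> g) ws id \<circ> h"
  by (induction ws) auto
lemma word_append[simp]: "word (ws @ vs) = word ws \<circ> word vs"
  unfolding word_def by (simp add: foldr_comp[of ws "foldr _ vs id"])

lemma Waff_word: "Waff = {word ws | ws. set ws \<subseteq> {0,1,2}}"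
proof
  show "Waff \<subseteq> {word ws | ws. set ws \<subseteq> {0,1,2}}"
  proof
    fix g assume "g \<in> Waff"
    then show "g \<in> {word ws | ws. set ws \<subseteq> {0,1,2}}" unfolding Waff_def
    proof (induction rule: gen.induct)
      case gen_id then show ?case by (intro CollectI exI[of _ "[]"]) simp
    next
      case (gen_step s g)
      then obtain ws i where "set ws \<subseteq> {0,1,2}" "g = word ws" "i \<in> {0,1,2}" "s = sref i" by auto
      then show ?case by (auto intro!: exI[of _ "i # ws"])
    qed
  qed
next
  show "{word ws | ws. set ws \<subseteq> {0,1,2}} \<subseteq> Waff"
  proof clarify
    fix ws :: "nat list" assume "set ws \<subseteq> {0,1,2}"
    then show "word ws \<in> Waff" unfolding Waff_def
      by (induction ws) (auto intro: gen.intros)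
  qed
qed

lemma Waff_comp: "g \<in> Waff \<Longrightarrow> h \<in> Waff \<Longrightarrow> g \<circ> h \<in> Waff"
proof -
  assume "g \<in> Waff" "h \<in> Waff"
  then obtain ws vs where "set ws \<subseteq> {0,1,2}" "g = word ws" "set vs \<subseteq> {0,1,2}" "h = word vs"
    unfolding Waff_word by auto
  then show ?thesis unfolding Waff_word by (intro CollectI exI[of _ "ws @ vs"]) auto
qed

lemma sref_Waff: "i \<in> {0,1,2} \<Longrightarrow> sref i \<in> Waff"
  unfolding Waff_word by (auto intro!: exI[of _ "[i]"])

lemma sref0_W: "sref 0 \<in> Waff" by (rule sref_Waff) simp
lemma sref1_W: "sref 1 \<in> Waff" by (rule sref_Waff) simp
lemma sref2_W: "sref 2 \<in> Waff" by (rule sref_Waff) simp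

lemma Waff_right: "g \<in> Waff \<Longrightarrow> i \<in> {0,1,2} \<Longrightarrow> g \<circ> sref i \<in> Waff"
  by (simp add: Waff_comp sref_Waff)

lemma gen_mono: "g \<in> gen S \<Longrightarrow> S \<subseteq> T \<Longrightarrow> g \<in> gen T"
  by (induction rule: gen.induct) (auto intro: gen.intros)

lemma Wfin_Waff: "u \<in> Wfin \<Longrightarrow> u \<in> Waff"
  unfolding Wfin_def Waff_def by (erule gen_mono) auto

lemma Wfin_step: "u \<in> Wfin \<Longrightarrow> i \<in> {1,2} \<Longrightarrow> sref i \<circ> u \<in> Wfin"
  unfolding Wfin_def by (auto intro: gen.intros)

definition sw12 :: "vec3 \<Rightarrow> vec3" where "sw12 q = (case q of (a,b,c) \<Rightarrow> (b,a,c))"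
definition sw23 :: "vec3 \<Rightarrow> vec3" where "sw23 q = (case q of (a,b,c) \<Rightarrow> (a,c,b))"
definition sw13 :: "vec3 \<Rightarrow> vec3" where "sw13 q = (case q of (a,b,c) \<Rightarrow> (c,b,a))"
definition V0 :: "vec3 set" where "V0 = {(a,b,c). a + b + c = 0}"
definition theta :: vec3 where "theta = (1,0,-1)"
definition s121 where "s121 = sref 1 \<circ> sref 2 \<circ> sref 1"

lemma s121_ap[simp]: "s121 (a1,a2,d,l) = (-a2, -a1, d, l)"
  by (simp add: s121_def)

lemma V0E: "q \<in> V0 \<Longrightarrow> (\<And>a b. q = (a, b, -a-b) \<Longrightarrow> P) \<Longrightarrow> P"
proof -
  assume "q \<in> V0" and h: "\<And>a b. q = (a, b, -a-b) \<Longrightarrow> P"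
  then obtain a b c where "q = (a,b,c)" "a+b+c = 0" unfolding V0_def by auto
  then have "q = (a, b, -a-b)" by auto
  then show P by (rule h)
qed

lemma I1: "q \<in> V0 \<Longrightarrow> sref 1 \<circ> tr q = tr (sw12 q) \<circ> sref 1"
  by (erule V0E) (rule hs_ext, auto simp: sw12_def algebra_simps)
lemma I2: "q \<in> V0 \<Longrightarrow> sref 2 \<circ> tr q = tr (sw23 q) \<circ> sref 2"
  by (erule V0E) (rule hs_ext, auto simp: sw23_def algebra_simps)
lemma I13: "q \<in> V0 \<Longrightarrow> s121 \<circ> tr q = tr (sw13 q) \<circ> s121"
  by (erule V0E) (rule hs_ext, auto simp: sw13_def algebra_simps)
lemma I3: "sref 0 = tr theta \<circ> s121"
  by (rule hs_ext, auto simp: theta_def algebra_simps)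
lemma I5: "a \<in> V0 \<Longrightarrow> b \<in> V0 \<Longrightarrow> tr a \<circ> tr b = tr (a + b)"
  by (erule V0E, erule V0E) (rule hs_ext, auto simp: algebra_simps)
lemma I6: "tr (0,0,0) = id"
  by (rule hs_ext, auto)

lemma Lam0_eq: "Lam0 = (0,0,0,1)" by (simp add: Lam0_def)

lemma Mlat_V0: "q \<in> Mlat \<Longrightarrow> q \<in> V0" by (auto simp: Mlat_def V0_def)

lemma MlatE: "q \<in> Mlat \<Longrightarrow> (\<And>i j. q = (of_int i, of_int j, - of_int i - of_int j) \<Longrightarrow> P) \<Longrightarrow> P"
proof -
  assume "q \<in> Mlat" and h: "\<And>i j. q = (of_int i, of_int j, - of_int i - of_int j) \<Longrightarrow> P"
  then obtain a b c where abc: "q = (a,b,c)" "a \<in> \<int>" "b \<in> \<int>" "a+b+c = 0" unfolding Mlat_def by auto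
  then obtain i j where "a = of_int i" "b = of_int j" by (auto elim!: Ints_cases)
  with abc have "q = (of_int i, of_int j, - of_int i - of_int j)" by auto
  then show P by (rule h)
qed

lemma Mlat_I: "q = (of_int i, of_int j, - of_int i - of_int j) \<Longrightarrow> q \<in> Mlat"
  by (auto simp: Mlat_def)

lemma Mlat_add: "a \<in> Mlat \<Longrightarrow> b \<in> Mlat \<Longrightarrow> a + b \<in> Mlat"
  by (auto simp: Mlat_def)
lemma Mlat_sw12: "a \<in> Mlat \<Longrightarrow> sw12 a \<in> Mlat" by (auto simp: Mlat_def sw12_def)
lemma Mlat_sw23: "a \<in> Mlat \<Longrightarrow> sw23 a \<in> Mlat" by (auto simp: Mlat_def sw23_def)
lemma Mlat_sw13: "a \<in> Mlat \<Longrightarrow> sw13 a \<in> Mlat" by (auto simp: Mlat_def sw13_def)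
lemma theta_Mlat: "theta \<in> Mlat" by (auto simp: Mlat_def theta_def)
lemma zero_Mlat: "(0,0,0) \<in> Mlat" by (auto simp: Mlat_def)

lemma f11: "sref 1 \<circ> sref 1 = id" by (rule hs_ext) auto
lemma f22: "sref 2 \<circ> sref 2 = id" by (rule hs_ext) auto
lemma f112: "sref 1 \<circ> (sref 1 \<circ> sref 2) = sref 2" by (rule hs_ext) auto
lemma f221: "sref 2 \<circ> (sref 2 \<circ> sref 1) = sref 1" by (rule hs_ext) auto
lemma f212: "sref 2 \<circ> (sref 1 \<circ> sref 2) = s121" by (rule hs_ext) auto
lemma f121: "sref 1 \<circ> (sref 2 \<circ> sref 1) = s121" by (rule hs_ext) auto
lemma f1s: "sref 1 \<circ> s121 = sref 2 \<circ> sref 1" by (rule hs_ext) auto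
lemma f2s: "sref 2 \<circ> s121 = sref 1 \<circ> sref 2" by (rule hs_ext) auto
lemma fss: "s121 \<circ> s121 = id" by (rule hs_ext) auto

lemma Wfin_six: "u \<in> Wfin \<Longrightarrow> u \<in> {id, sref 1, sref 2, sref 1 \<circ> sref 2, sref 2 \<circ> sref 1, s121}"
  unfolding Wfin_def
proof (induction rule: gen.induct)
  case gen_id then show ?case by simp
next
  case (gen_step s g)
  then show ?case
    by (auto simp: f11 f22 f112 f221 f212 f121 f1s f2s)
qed

lemma Wfin_Lam0: "u \<in> Wfin \<Longrightarrow> u Lam0 = Lam0"
  unfolding Wfin_def
  by (induction rule: gen.induct) (auto simp: Lam0_eq)

lemma s121_Wfin: "u \<in> Wfin \<Longrightarrow> s121 \<circ> u \<in> Wfin"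
  unfolding s121_def by (simp add: o_assoc[symmetric] Wfin_step)

lemma decomp: "w \<in> Waff \<Longrightarrow> \<exists>q u. q \<in> Mlat \<and> u \<in> Wfin \<and> w = tr q \<circ> u"
  unfolding Waff_def
proof (induction rule: gen.induct)
  case gen_id
  have "id = tr (0,0,0) \<circ> id" by (simp add: I6)
  moreover have "id \<in> Wfin" unfolding Wfin_def by (rule gen.gen_id)
  ultimately show ?case using zero_Mlat by blast
next
  case (gen_step s g)
  then obtain q u where qu: "q \<in> Mlat" "u \<in> Wfin" "g = tr q \<circ> u" by blast
  have V: "q \<in> V0" using qu Mlat_V0 by auto
  from gen_step obtain i where i: "i \<in> {0,1,2}" "s = sref i" by auto
  consider "i = 0" | "i = 1" | "i = 2" using i by auto
  then show ?case
  proof cases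
    case 1
    have "s \<circ> g = tr theta \<circ> (s121 \<circ> tr q) \<circ> u" using i qu 1 by (simp add: I3 o_assoc)
    also have "\<dots> = tr (theta + sw13 q) \<circ> (s121 \<circ> u)"
    proof -
      have e: "tr theta \<circ> tr (sw13 q) = tr (theta + sw13 q)"
        using qu by (intro I5) (auto intro: Mlat_V0 Mlat_sw13 theta_Mlat)
      show ?thesis using V e by (simp add: I13 o_assoc)
    qed
    finally show ?thesis using qu Mlat_add theta_Mlat Mlat_sw13 s121_Wfin by blast
  next
    case 2
    have "s \<circ> g = (sref 1 \<circ> tr q) \<circ> u" using i qu 2 by (simp add: o_assoc)
    also have "\<dots> = tr (sw12 q) \<circ> (sref 1 \<circ> u)" by (simp only: o_assoc I1[OF V])
    finally show ?thesis using qu Mlat_sw12 Wfin_step by blast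
  next
    case 3
    have "s \<circ> g = (sref 2 \<circ> tr q) \<circ> u" using i qu 3 by (simp add: o_assoc)
    also have "\<dots> = tr (sw23 q) \<circ> (sref 2 \<circ> u)" by (simp only: o_assoc I2[OF V])
    finally show ?thesis using qu Mlat_sw23 Wfin_step by blast
  qed
qed

lemma tr_Lam0: "q \<in> V0 \<Longrightarrow> fin (tr q Lam0) = q"
  by (erule V0E) (simp add: Lam0_eq fin_def)

lemma transl_eq: "q \<in> Mlat \<Longrightarrow> u \<in> Wfin \<Longrightarrow> transl (tr q \<circ> u) = q"
  unfolding transl_def
proof (rule the_equality)
  assume "q \<in> Mlat" "u \<in> Wfin"
  then show "q \<in> Mlat \<and> (\<exists>u'\<in>Wfin. tr q \<circ> u = tr q \<circ> u')" by auto
next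
  fix q' assume a: "q \<in> Mlat" "u \<in> Wfin" "q' \<in> Mlat \<and> (\<exists>u'\<in>Wfin. tr q \<circ> u = tr q' \<circ> u')"
  then obtain u' where "u' \<in> Wfin" "tr q \<circ> u = tr q' \<circ> u'" by auto
  then have "tr q (u Lam0) = tr q' (u' Lam0)" by (metis comp_apply)
  then have "tr q Lam0 = tr q' Lam0" using a \<open>u' \<in> Wfin\<close> by (simp add: Wfin_Lam0)
  then show "q' = q" using a by (metis tr_Lam0 Mlat_V0)
qed

lemma s121_Waff: "s121 \<in> Waff"
  unfolding s121_def by (intro Waff_comp sref_Waff) auto

lemma trW_theta: "tr theta \<in> Waff"
proof -
  have "sref 0 \<circ> s121 = tr theta" by (simp add: I3 o_assoc[symmetric] fss)
  then show ?thesis using s121_Waff sref0_W Waff_comp by metis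
qed

lemma V0_sw12: "q \<in> V0 \<Longrightarrow> sw12 q \<in> V0" by (auto simp: V0_def sw12_def)
lemma V0_sw13: "q \<in> V0 \<Longrightarrow> sw13 q \<in> V0" by (auto simp: V0_def sw13_def)
lemma V0_add: "a \<in> V0 \<Longrightarrow> b \<in> V0 \<Longrightarrow> a + b \<in> V0" by (auto simp: V0_def)
lemma V0_scale: "a \<in> V0 \<Longrightarrow> c *\<^sub>R a \<in> V0" by (erule V0E) (auto simp: V0_def algebra_simps)

lemma trW_sw12: "q \<in> V0 \<Longrightarrow> tr q \<in> Waff \<Longrightarrow> tr (sw12 q) \<in> Waff"
proof -
  assume V: "q \<in> V0" and W: "tr q \<in> Waff"
  have "sref 1 \<circ> tr q \<circ> sref 1 = tr (sw12 q) \<circ> (sref 1 \<circ> sref 1)"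
    by (simp only: I1[OF V] o_assoc)
  then have "sref 1 \<circ> tr q \<circ> sref 1 = tr (sw12 q)" by (simp only: f11 o_id)
  then show ?thesis using W sref1_W Waff_comp by metis
qed

lemma trW_sw13: "q \<in> V0 \<Longrightarrow> tr q \<in> Waff \<Longrightarrow> tr (sw13 q) \<in> Waff"
proof -
  assume V: "q \<in> V0" and W: "tr q \<in> Waff"
  have "s121 \<circ> tr q \<circ> s121 = tr (sw13 q) \<circ> (s121 \<circ> s121)"
    by (simp only: I13[OF V] o_assoc)
  then have "s121 \<circ> tr q \<circ> s121 = tr (sw13 q)" by (simp add: fss)
  then show ?thesis using W s121_Waff Waff_comp by metis
qed

lemma trW_add: "a \<in> V0 \<Longrightarrow> b \<in> V0 \<Longrightarrow> tr a \<in> Waff \<Longrightarrow> tr b \<in> Waff \<Longrightarrow> tr (a + b) \<in> Waff"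
  using I5 Waff_comp by metis

lemma id_Waff: "id \<in> Waff" unfolding Waff_def by (rule gen.gen_id)

lemma trW_nat: "r \<in> V0 \<Longrightarrow> tr r \<in> Waff \<Longrightarrow> tr (real n *\<^sub>R r) \<in> Waff"
proof (induction n)
  case 0
  have "real 0 *\<^sub>R r = (0,0,0)" by (cases r) (simp add: zero_prod_def)
  then show ?case using I6 id_Waff by metis
next
  case (Suc n)
  have "real (Suc n) *\<^sub>R r = real n *\<^sub>R r + r" by (simp add: algebra_simps)
  then show ?case using Suc trW_add V0_scale by metis
qed

lemma trW_int: "r \<in> V0 \<Longrightarrow> tr r \<in> Waff \<Longrightarrow> tr (-r) \<in> Waff \<Longrightarrow> tr (real_of_int i *\<^sub>R r) \<in> Waff"
proof (cases "i \<ge> 0")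
  case True
  assume "r \<in> V0" "tr r \<in> Waff"
  then show ?thesis using trW_nat[of r "nat i"] True by simp
next
  case False
  assume "r \<in> V0" "tr (-r) \<in> Waff"
  moreover have "-r \<in> V0" using \<open>r \<in> V0\<close> V0_scale[of r "-1"] by simp
  ultimately have "tr (real (nat (-i)) *\<^sub>R (-r)) \<in> Waff" using trW_nat by blast
  then show ?thesis using False by simp
qed

lemma trW_Mlat: "q \<in> Mlat \<Longrightarrow> tr q \<in> Waff"
proof -
  assume "q \<in> Mlat"
  then obtain i j where q: "q = (of_int i, of_int j, - of_int i - of_int j)" by (rule MlatE)
  define b :: vec3 where "b = (0,1,-1)"
  have th: "theta \<in> V0" "b \<in> V0" "-theta \<in> V0" "-b \<in> V0" by (auto simp: theta_def b_def V0_def)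
  have "b = sw12 theta" by (simp add: b_def theta_def sw12_def)
  then have tb: "tr b \<in> Waff" using trW_sw12 trW_theta th by metis
  have "-theta = sw13 theta" by (simp add: theta_def sw13_def)
  then have tmt: "tr (-theta) \<in> Waff" using trW_sw13 trW_theta th by metis
  have "-b = sw12 (-theta)" by (simp add: b_def theta_def sw12_def)
  then have tmb: "tr (-b) \<in> Waff" using trW_sw12 tmt th by metis
  have "q = real_of_int i *\<^sub>R theta + real_of_int j *\<^sub>R b" by (simp add: q theta_def b_def)
  moreover have "tr (real_of_int i *\<^sub>R theta) \<in> Waff" using trW_int th trW_theta tmt by blast
  moreover have "tr (real_of_int j *\<^sub>R b) \<in> Waff" using trW_int th tb tmb by blast
  ultimately show ?thesis using trW_add V0_scale th by metis
qed

lemma trU_Waff: "q \<in> Mlat \<Longrightarrow> u \<in> Wfin \<Longrightarrow> tr q \<circ> u \<in> Waff"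
  using trW_Mlat Wfin_Waff Waff_comp by blast




definition R3 :: "(real \<times> real) set" where "R3 = {(1,0),(0,1),(1,1)}"
definition NR3 :: "(real \<times> real) set" where "NR3 = {(-1,0),(0,-1),(-1,-1)}"
definition Pos :: "hs set" where
  "Pos = {(a1,a2,d,l). l = 0 \<and> d \<in> \<int> \<and> (((a1,a2) \<in> R3 \<union> NR3 \<and> d \<ge> 1) \<or> ((a1,a2) \<in> R3 \<and> d = 0))}"
definition Neg :: "hs set" where
  "Neg = {(a1,a2,d,l). l = 0 \<and> d \<in> \<int> \<and> (((a1,a2) \<in> R3 \<union> NR3 \<and> d \<le> -1) \<or> ((a1,a2) \<in> NR3 \<and> d = 0))}"
definition Phi :: "hs set" where
  "Phi = {(a1,a2,d,l). l = 0 \<and> d \<in> \<int> \<and> (a1,a2) \<in> R3 \<union> NR3}"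
definition alpha :: "nat \<Rightarrow> hs" where
  "alpha i = (if i = 0 then (-1,-1,1,0) else if i = 1 then (1,0,0,0) else (0,1,0,0))"


lemma R3_iff: "(a,b) \<in> R3 \<longleftrightarrow> (a = 1 \<and> b = 0) \<or> (a = 0 \<and> b = 1) \<or> (a = 1 \<and> b = 1)"
  by (simp add: R3_def)
lemma NR3_iff: "(a,b) \<in> NR3 \<longleftrightarrow> (a = -1 \<and> b = 0) \<or> (a = 0 \<and> b = -1) \<or> (a = -1 \<and> b = -1)"
  by (simp add: NR3_def)
lemma Pos_iff: "(a1,a2,d,l) \<in> Pos \<longleftrightarrow> l = 0 \<and> d \<in> \<int> \<and> (((a1,a2) \<in> R3 \<or> (a1,a2) \<in> NR3) \<and> d \<ge> 1 \<or> (a1,a2) \<in> R3 \<and> d = 0)"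
  unfolding Pos_def by auto
lemma Neg_iff: "(a1,a2,d,l) \<in> Neg \<longleftrightarrow> l = 0 \<and> d \<in> \<int> \<and> (((a1,a2) \<in> R3 \<or> (a1,a2) \<in> NR3) \<and> d \<le> -1 \<or> (a1,a2) \<in> NR3 \<and> d = 0)"
  unfolding Neg_def by auto
lemma Phi_iff: "(a1,a2,d,l) \<in> Phi \<longleftrightarrow> l = 0 \<and> d \<in> \<int> \<and> ((a1,a2) \<in> R3 \<or> (a1,a2) \<in> NR3)"
  unfolding Phi_def by auto
lemma R3_NR3: "(a,b) \<in> R3 \<Longrightarrow> (a,b) \<notin> NR3"
  unfolding R3_iff NR3_iff by auto

lemma R6_cases:
  assumes "(a,b) \<in> R3 \<or> (a,b) \<in> NR3"
  obtains "a = 1" "b = 0" | "a = 0" "b = 1" | "a = 1" "b = 1" | "a = -1" "b = 0" | "a = 0" "b = -1" | "a = -1" "b = -1"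
  using assms unfolding R3_iff NR3_iff by blast

lemma Ints5: "d \<in> \<int> \<Longrightarrow> d \<le> -1 \<or> d = 0 \<or> d = 1 \<or> d = 2 \<or> d \<ge> (3::real)"
proof -
  assume "d \<in> \<int>"
  then obtain k where k: "d = of_int k" by (auto elim: Ints_cases)
  have "k \<le> -1 \<or> k = 0 \<or> k = 1 \<or> k = 2 \<or> k \<ge> 3" by linarith
  then show ?thesis using k by auto
qed

lemma Ints4: "d \<in> \<int> \<Longrightarrow> d \<le> -1 \<or> d = 0 \<or> d = 1 \<or> d \<ge> (2::real)"
proof -
  assume "d \<in> \<int>"
  then obtain k where k: "d = of_int k" by (auto elim: Ints_cases)
  have "k \<le> -1 \<or> k = 0 \<or> k = 1 \<or> k \<ge> 2" by linarith
  then show ?thesis using k by auto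
qed

lemma Pos_disj: "x \<in> Pos \<Longrightarrow> x \<notin> Neg"
  by (cases x) (auto simp: Pos_iff Neg_iff dest: R3_NR3)

lemma Phi_split: "x \<in> Phi \<longleftrightarrow> x \<in> Pos \<or> x \<in> Neg"
proof (cases x)
  case (fields a1 a2 d l)
  show ?thesis
  proof
    assume "x \<in> Phi"
    then have "d \<in> \<int>" "l = 0" "(a1,a2) \<in> R3 \<or> (a1,a2) \<in> NR3" using fields by (auto simp: Phi_iff)
    then show "x \<in> Pos \<or> x \<in> Neg" using Ints4[of d] fields
      by (elim R6_cases) (auto simp: Pos_iff Neg_iff R3_iff NR3_iff)
  next
    assume "x \<in> Pos \<or> x \<in> Neg"
    then show "x \<in> Phi" using fields
      by (auto simp: Phi_iff Pos_iff Neg_iff)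
  qed
qed

lemma neg_R3: "(-a,-b) \<in> NR3 \<longleftrightarrow> (a,b) \<in> R3" unfolding R3_iff NR3_iff by auto
lemma neg_NR3: "(-a,-b) \<in> R3 \<longleftrightarrow> (a,b) \<in> NR3" unfolding R3_iff NR3_iff by auto

lemma neg_Pos: "- x \<in> Neg \<longleftrightarrow> x \<in> Pos"
  by (cases x) (auto simp: Pos_iff Neg_iff neg_R3 neg_NR3)
lemma neg_Neg: "- x \<in> Pos \<longleftrightarrow> x \<in> Neg"
  by (cases x) (auto simp: Pos_iff Neg_iff neg_R3 neg_NR3)

lemma alpha_Pos: "alpha i \<in> Pos"
  by (auto simp: alpha_def Pos_iff R3_iff NR3_iff)

lemma sref_neg: "i \<in> {0,1,2} \<Longrightarrow> sref i (- x) = - sref i x"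
  by (cases x) auto

lemma sref_invol: "i \<in> {0,1,2} \<Longrightarrow> sref i (sref i x) = x"
  by (cases x) auto

lemma sref_alpha: "i \<in> {0,1,2} \<Longrightarrow> sref i (alpha i) = - alpha i"
  by (auto simp: alpha_def)

lemma sref_Phi: "i \<in> {0,1,2} \<Longrightarrow> x \<in> Phi \<Longrightarrow> sref i x \<in> Phi"
proof (cases x)
  case (fields a1 a2 d l)
  assume i: "i \<in> {0,1,2}" and P: "x \<in> Phi"
  then have "d \<in> \<int>" "l = 0" "(a1,a2) \<in> R3 \<or> (a1,a2) \<in> NR3" using fields by (auto simp: Phi_iff)
  then show ?thesis using i fields
    by (elim R6_cases) (auto simp: Phi_iff R3_iff NR3_iff)
qed

lemma sref_Pos: "i \<in> {0,1,2} \<Longrightarrow> x \<in> Pos \<Longrightarrow> x \<noteq> alpha i \<Longrightarrow> sref i x \<in> Pos"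
proof (cases x)
  case (fields a1 a2 d l)
  assume i: "i \<in> {0,1,2}" and P: "x \<in> Pos" and ne: "x \<noteq> alpha i"
  then have "d \<in> \<int>" "l = 0" "(a1,a2) \<in> R3 \<and> d = 0 \<or> ((a1,a2) \<in> R3 \<or> (a1,a2) \<in> NR3) \<and> d \<ge> 1"
    using fields by (auto simp: Pos_iff)
  then have "d \<in> \<int>" "l = 0" "(a1,a2) \<in> R3 \<or> (a1,a2) \<in> NR3" "d = 0 \<longrightarrow> (a1,a2) \<in> R3" "d = 0 \<or> d = 1 \<or> d = 2 \<or> d \<ge> 3"
    using Ints5[of d] by auto
  then show ?thesis using i fields ne
    by (elim R6_cases) (auto simp: Pos_iff R3_iff NR3_iff alpha_def)
qed




lemma Waff_neg: "g \<in> Waff \<Longrightarrow> g (- x) = - g x"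
  unfolding Waff_def
  by (induction arbitrary: x rule: gen.induct) (auto simp: sref_neg)

lemma Waff_Phi: "g \<in> Waff \<Longrightarrow> x \<in> Phi \<Longrightarrow> g x \<in> Phi"
  unfolding Waff_def
  by (induction arbitrary: x rule: gen.induct) (auto simp: sref_Phi)

definition Inv :: "(hs \<Rightarrow> hs) \<Rightarrow> hs set" where "Inv g = {x \<in> Pos. g x \<in> Neg}"
definition ninv :: "(hs \<Rightarrow> hs) \<Rightarrow> nat" where "ninv g = card (Inv g)"

lemma Inv_comp:
  assumes g: "g \<in> Waff" and i: "i \<in> {0,1,2}"
  shows "Inv (g \<circ> sref i) = sref i ` (Inv g - {alpha i}) \<union> (if g (alpha i) \<in> Pos then {alpha i} else {})"
proof (rule set_eqI)
  fix x
  have ga: "g (sref i (alpha i)) = - g (alpha i)" using g i by (simp add: sref_alpha Waff_neg)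
  show "x \<in> Inv (g \<circ> sref i) \<longleftrightarrow> x \<in> sref i ` (Inv g - {alpha i}) \<union> (if g (alpha i) \<in> Pos then {alpha i} else {})"
  proof
    assume x: "x \<in> Inv (g \<circ> sref i)"
    show "x \<in> sref i ` (Inv g - {alpha i}) \<union> (if g (alpha i) \<in> Pos then {alpha i} else {})"
    proof (cases "x = alpha i")
      case True
      then have "g (alpha i) \<in> Pos" using x ga by (simp add: Inv_def neg_Pos)
      then show ?thesis using True by simp
    next
      case False
      let ?y = "sref i x"
      have "x \<in> Pos" using x by (simp add: Inv_def)
      then have yP: "?y \<in> Pos" using False i sref_Pos by blast
      have "?y \<noteq> alpha i"
      proof
        assume "?y = alpha i"
        then have "x = - alpha i" using sref_invol[OF i, of x] sref_alpha[OF i] by simp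
        then have "x \<in> Neg" using alpha_Pos neg_Pos by simp
        moreover have "x \<in> Pos" using x by (simp add: Inv_def)
        ultimately show False using Pos_disj by blast
      qed
      moreover have "g ?y \<in> Neg" using x by (simp add: Inv_def)
      ultimately have "?y \<in> Inv g - {alpha i}" using yP by (simp add: Inv_def)
      moreover have "x = sref i ?y" using sref_invol[OF i, of x] by simp
      ultimately show ?thesis by blast
    qed
  next
    assume x: "x \<in> sref i ` (Inv g - {alpha i}) \<union> (if g (alpha i) \<in> Pos then {alpha i} else {})"
    then consider "x \<in> sref i ` (Inv g - {alpha i})" | "x = alpha i" "g (alpha i) \<in> Pos"
      by (auto split: if_splits)
    then show "x \<in> Inv (g \<circ> sref i)"
    proof cases
      case 1
      then obtain y where y: "y \<in> Inv g" "y \<noteq> alpha i" "x = sref i y" by auto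
      have "y \<in> Pos" "g y \<in> Neg" using y(1) by (auto simp: Inv_def)
      then have "x \<in> Pos" using y(2,3) i sref_Pos by blast
      moreover have "g (sref i x) \<in> Neg" using y(3) \<open>g y \<in> Neg\<close> sref_invol[OF i, of y] by simp
      ultimately show ?thesis by (simp add: Inv_def)
    next
      case 2
      then show ?thesis using ga alpha_Pos by (simp add: Inv_def neg_Pos)
    qed
  qed
qed

lemma word_snoc: "word (ws @ [i]) = word ws \<circ> sref i" by simp

lemma Inv_finite: "g \<in> Waff \<Longrightarrow> finite (Inv g)"
proof -
  assume "g \<in> Waff"
  then obtain ws where ws: "set ws \<subseteq> {0,1,2}" "g = word ws" unfolding Waff_word by auto
  have "finite (Inv (word ws))" using ws(1)
  proof (induction ws rule: rev_induct)
    case Nil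
    have "Inv (word []) = {}" unfolding Inv_def using Pos_disj by simp
    then show ?case by (metis finite.emptyI)
  next
    case (snoc i ws)
    have W: "word ws \<in> Waff" using snoc.prems unfolding Waff_word by auto
    have i: "i \<in> {0,1,2}" using snoc.prems by auto
    show ?case using snoc W i by (simp only: word_snoc Inv_comp) auto
  qed
  then show ?thesis using ws by simp
qed

lemma ninv_comp:
  assumes g: "g \<in> Waff" and i: "i \<in> {0,1,2}"
  shows "ninv (g \<circ> sref i) = (if g (alpha i) \<in> Pos then Suc (ninv g) else ninv g - 1)"
    and "g (alpha i) \<notin> Pos \<Longrightarrow> ninv g \<ge> 1"
proof -
  let ?a = "alpha i"
  have fin: "finite (Inv g)" using g Inv_finite by blast
  have inj: "inj_on (sref i) X" for X using i sref_invol by (metis inj_onI)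
  have c1: "card (sref i ` (Inv g - {?a})) = card (Inv g - {?a})" using inj card_image by blast
  have na: "?a \<notin> sref i ` (Inv g - {?a})"
  proof
    assume "?a \<in> sref i ` (Inv g - {?a})"
    then obtain y where "y \<in> Inv g" "?a = sref i y" by auto
    then have "y = - ?a" "y \<in> Pos" using i sref_invol sref_alpha by (metis, simp add: Inv_def)
    then show False using alpha_Pos neg_Pos Pos_disj by metis
  qed
  show "g ?a \<notin> Pos \<Longrightarrow> ninv g \<ge> 1"
  proof -
    assume "g ?a \<notin> Pos"
    moreover have "g ?a \<in> Phi" using g Waff_Phi alpha_Pos Phi_split by blast
    ultimately have "?a \<in> Inv g" using alpha_Pos Phi_split by (auto simp: Inv_def)
    then show ?thesis using fin unfolding ninv_def by (metis One_nat_def Suc_leI card_gt_0_iff empty_iff)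
  qed
  show "ninv (g \<circ> sref i) = (if g ?a \<in> Pos then Suc (ninv g) else ninv g - 1)"
  proof (cases "g ?a \<in> Pos")
    case True
    then have "?a \<notin> Inv g" using Pos_disj by (auto simp: Inv_def)
    then have e: "Inv g - {?a} = Inv g" by simp
    have "Inv (g \<circ> sref i) = insert ?a (sref i ` (Inv g - {?a}))" using True Inv_comp[OF g i] by simp
    then have "card (Inv (g \<circ> sref i)) = Suc (card (sref i ` (Inv g - {?a})))"
      using na fin by (simp add: card_insert_disjoint)
    then show ?thesis using True c1 e unfolding ninv_def by simp
  next
    case False
    moreover have "g ?a \<in> Phi" using g Waff_Phi alpha_Pos Phi_split by blast
    ultimately have "?a \<in> Inv g" using alpha_Pos Phi_split by (auto simp: Inv_def)
    have "Inv (g \<circ> sref i) = sref i ` (Inv g - {?a})" using False Inv_comp[OF g i] by simp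
    then have "card (Inv (g \<circ> sref i)) = card (Inv g) - 1"
      using c1 fin \<open>?a \<in> Inv g\<close> by (simp add: card_Diff_singleton)
    then show ?thesis using False unfolding ninv_def by simp
  qed
qed

lemma ninv_id: "ninv id = 0"
proof -
  have "Inv id = {}" unfolding Inv_def using Pos_disj by simp
  then show ?thesis unfolding ninv_def by simp
qed

lemma fold_ri:
  "real_of_int x + real_of_int y = real_of_int (x + y)"
  "real_of_int x - real_of_int y = real_of_int (x - y)"
  "- real_of_int x = real_of_int (- x)"
  "numeral n * real_of_int x = real_of_int (numeral n * x)"
  "real_of_int x + 1 = real_of_int (x + 1)" "1 + real_of_int x = real_of_int (1 + x)"
  "real_of_int x - 1 = real_of_int (x - 1)" "1 - real_of_int x = real_of_int (1 - x)"
  "real_of_int x + numeral n = real_of_int (x + numeral n)" "numeral n + real_of_int x = real_of_int (numeral n + x)"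
  "real_of_int x - numeral n = real_of_int (x - numeral n)" "numeral n - real_of_int x = real_of_int (numeral n - x)"
  by simp_all

lemmas cmp_ri = of_int_eq_iff of_int_le_iff of_int_less_iff of_int_eq_0_iff of_int_0_eq_iff of_int_eq_1_iff
  of_int_0_le_iff of_int_le_0_iff of_int_0_less_iff of_int_less_0_iff of_int_1_le_iff of_int_le_1_iff
  of_int_1_less_iff of_int_less_1_iff of_int_eq_numeral_iff of_int_le_numeral_iff of_int_numeral_le_iff
  of_int_less_numeral_iff of_int_numeral_less_iff

lemma Dprime:
  assumes g: "g \<in> Waff" and P: "g (alpha 0) \<in> Pos" "g (alpha 1) \<in> Pos" "g (alpha 2) \<in> Pos"
  shows "g = id"
proof -
  obtain q u where qu: "q \<in> Mlat" "u \<in> Wfin" "g = tr q \<circ> u" using decomp[OF g] by blast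
  obtain a b where q: "q = (of_int a, of_int b, - of_int a - of_int b)" using qu(1) by (rule MlatE)
  have six: "u \<in> {id, sref 1, sref 2, sref 1 \<circ> sref 2, sref 2 \<circ> sref 1, s121}" using qu(2) by (rule Wfin_six)
  have P': "(tr q \<circ> u) (alpha 0) \<in> Pos" "(tr q \<circ> u) (alpha 1) \<in> Pos" "(tr q \<circ> u) (alpha 2) \<in> Pos"
    using P qu(3) by auto
  have "u = id \<and> real_of_int a = 0 \<and> real_of_int b = 0"
  proof -
    consider "u = id" | "u = sref 1" | "u = sref 2" | "u = sref 1 \<circ> sref 2" | "u = sref 2 \<circ> sref 1" | "u = s121"
      using six by blast
    then show ?thesis
    proof cases
      case 1 then show ?thesis using P' apply (simp add: q alpha_def Pos_iff R3_iff NR3_iff) apply (simp only: fold_ri cmp_ri) apply presburger done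
    next
      case 2 then have False using P' by (simp add: q alpha_def Pos_iff R3_iff NR3_iff)
      then show ?thesis by simp
    next
      case 3 then have False using P' by (simp add: q alpha_def Pos_iff R3_iff NR3_iff)
      then show ?thesis by simp
    next
      case 4 then have False using P' apply (simp add: q alpha_def Pos_iff R3_iff NR3_iff) apply (simp only: fold_ri cmp_ri) apply presburger done
      then show ?thesis by simp
    next
      case 5 then have False using P' apply (simp add: q alpha_def Pos_iff R3_iff NR3_iff) apply (simp only: fold_ri cmp_ri) apply presburger done
      then show ?thesis by simp
    next
      case 6 then have False using P' by (simp add: q alpha_def Pos_iff R3_iff NR3_iff)
      then show ?thesis by simp
    qed
  qed
  then show ?thesis using qu(3) q I6 by simp
qed

lemma ninv_le_len: "set ws \<subseteq> {0,1,2} \<Longrightarrow> ninv (word ws) \<le> length ws"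
proof (induction ws rule: rev_induct)
  case Nil then show ?case using ninv_id by (simp add: id_def)
next
  case (snoc i ws)
  have W: "word ws \<in> Waff" using snoc.prems unfolding Waff_word by auto
  have i: "i \<in> {0,1,2}" using snoc.prems by auto
  have "ninv (word ws \<circ> sref i) \<le> Suc (ninv (word ws))" using ninv_comp(1)[OF W i] by (auto split: if_splits)
  then have "ninv (word (ws @ [i])) \<le> Suc (ninv (word ws))" by (simp only: word_snoc)
  moreover have "ninv (word ws) \<le> length ws" using snoc by auto
  ultimately show ?case by (simp del: word_append)
qed

lemma all_Pos_id: "g \<in> Waff \<Longrightarrow> (\<And>i. i \<in> {0,1,2} \<Longrightarrow> g (alpha i) \<in> Pos) \<Longrightarrow> g = id"
  using Dprime by auto

lemma exists_word: "g \<in> Waff \<Longrightarrow> \<exists>ws. set ws \<subseteq> {0,1,2} \<and> length ws = ninv g \<and> word ws = g"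
proof (induction "ninv g" arbitrary: g)
  case 0
  have fin: "finite (Inv g)" using 0 Inv_finite by blast
  then have "Inv g = {}" using 0 unfolding ninv_def by simp
  then have "g (alpha i) \<in> Pos" if "i \<in> {0,1,2}" for i
    using alpha_Pos Waff_Phi[OF 0(2)] Phi_split unfolding Inv_def by blast
  then have "g = id" using all_Pos_id 0 by blast
  then show ?case using 0 by (intro exI[of _ "[]"]) simp
next
  case (Suc n)
  have "\<exists>i\<in>{0,1,2}. g (alpha i) \<notin> Pos"
  proof (rule ccontr)
    assume "\<not> (\<exists>i\<in>{0,1,2}. g (alpha i) \<notin> Pos)"
    then have "g = id" using all_Pos_id Suc by blast
    then show False using Suc ninv_id by simp
  qed
  then obtain i where i: "i \<in> {0,1,2}" "g (alpha i) \<notin> Pos" by blast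
  let ?g = "g \<circ> sref i"
  have W: "?g \<in> Waff" using Suc.prems i Waff_right by blast
  have "ninv ?g = n" using ninv_comp(1)[OF Suc.prems i(1)] i(2) Suc(2) by simp
  then obtain ws where ws: "set ws \<subseteq> {0,1,2}" "length ws = n" "word ws = ?g" using Suc.hyps W by metis
  have "?g \<circ> sref i = g" using sref_invol[OF i(1)] by (simp add: comp_def)
  then have "word (ws @ [i]) = g" using ws by (simp only: word_snoc)
  then show ?case using ws i Suc(2) by (intro exI[of _ "ws @ [i]"]) simp
qed

lemma clen_ninv: "g \<in> Waff \<Longrightarrow> clen g = ninv g"
  unfolding clen_def
proof (rule Least_equality)
  assume "g \<in> Waff"
  then show "\<exists>ws. set ws \<subseteq> {0,1,2} \<and> length ws = ninv g \<and> word ws = g" by (rule exists_word)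
next
  fix m assume "\<exists>ws. set ws \<subseteq> {0,1,2} \<and> length ws = m \<and> word ws = g"
  then show "ninv g \<le> m" using ninv_le_len by blast
qed

lemma Wup0_iff: "w \<in> Wup0 \<longleftrightarrow> w \<in> Waff \<and> w (alpha 1) \<in> Pos \<and> w (alpha 2) \<in> Pos"
proof -
  have key: "clen (w \<circ> sref k) > clen w \<longleftrightarrow> w (alpha k) \<in> Pos" if "w \<in> Waff" "k \<in> {0,1,2}" for k
  proof -
    have "clen (w \<circ> sref k) = ninv (w \<circ> sref k)" using that Waff_right clen_ninv by blast
    moreover have "clen w = ninv w" using that clen_ninv by blast
    ultimately show ?thesis using ninv_comp[OF that] by auto
  qed
  show ?thesis unfolding Wup0_def using key[of 1] key[of 2] by auto
qed

lemma Wfin_right: "u \<in> Wfin \<Longrightarrow> t \<in> {sref 1, sref 2} \<Longrightarrow> u \<circ> t \<in> Wfin"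
  unfolding Wfin_def
proof (induction rule: gen.induct)
  case gen_id
  then show ?case using gen.gen_step[OF _ gen.gen_id, of t] by simp
next
  case (gen_step s g)
  then have "g \<circ> t \<in> gen {sref 1, sref 2}" by blast
  then have "s \<circ> (g \<circ> t) \<in> gen {sref 1, sref 2}" using gen_step(1) gen.gen_step by blast
  then show ?case by (simp only: o_assoc)
qed

lemma Wup0_exists: "q \<in> Mlat \<Longrightarrow> \<exists>w\<in>Wup0. transl w = q"
proof -
  assume q: "q \<in> Mlat"
  have "id \<in> Wfin" unfolding Wfin_def by (rule gen.gen_id)
  then obtain u where u: "u \<in> Wfin" "\<And>v. v \<in> Wfin \<Longrightarrow> ninv (tr q \<circ> u) \<le> ninv (tr q \<circ> v)"
    using ex_has_least_nat[of "\<lambda>v. v \<in> Wfin" id "\<lambda>v. ninv (tr q \<circ> v)"] by blast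
  let ?w = "tr q \<circ> u"
  have W: "?w \<in> Waff" using trU_Waff q u by blast
  have "?w (alpha k) \<in> Pos" if k: "k \<in> {1,2}" for k
  proof (rule ccontr)
    assume n: "?w (alpha k) \<notin> Pos"
    have k3: "k \<in> {0,1,2}" using k by auto
    have "ninv (?w \<circ> sref k) = ninv ?w - 1" "ninv ?w \<ge> 1" using ninv_comp[OF W k3] n by auto
    moreover have "u \<circ> sref k \<in> Wfin" using Wfin_right u k by blast
    then have "ninv ?w \<le> ninv (tr q \<circ> (u \<circ> sref k))" using u by blast
    ultimately show False by (simp add: o_assoc)
  qed
  then have "?w \<in> Wup0" using W Wup0_iff by auto
  moreover have "transl ?w = q" using transl_eq q u by blast
  ultimately show ?thesis by blast
qed

lemma chamber_unique:
  assumes q: "q = (of_int a, of_int b, - of_int a - of_int b)"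
    and u: "u \<in> {id, sref 1, sref 2, sref 1 \<circ> sref 2, sref 2 \<circ> sref 1, s121}"
    and v: "v \<in> {id, sref 1, sref 2, sref 1 \<circ> sref 2, sref 2 \<circ> sref 1, s121}"
    and cu: "(tr q \<circ> u) (alpha 1) \<in> Pos" "(tr q \<circ> u) (alpha 2) \<in> Pos"
    and cv: "(tr q \<circ> v) (alpha 1) \<in> Pos" "(tr q \<circ> v) (alpha 2) \<in> Pos"
  shows "u = v"
  using u v cu cv
  apply (elim insertE emptyE)
  apply (simp_all add: q alpha_def Pos_iff R3_iff NR3_iff)
  apply (simp_all only: fold_ri cmp_ri)
  apply (rule FalseE, thin_tac "u = _", thin_tac "v = _", presburger)+
  done

lemma Wup0_unique: "w \<in> Wup0 \<Longrightarrow> w' \<in> Wup0 \<Longrightarrow> transl w = transl w' \<Longrightarrow> w = w'"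
proof -
  assume w: "w \<in> Wup0" and w': "w' \<in> Wup0" and t: "transl w = transl w'"
  obtain q u where qu: "q \<in> Mlat" "u \<in> Wfin" "w = tr q \<circ> u" using decomp w Wup0_iff by blast
  obtain q' u' where qu': "q' \<in> Mlat" "u' \<in> Wfin" "w' = tr q' \<circ> u'" using decomp w' Wup0_iff by blast
  have "q = q'" using t qu qu' transl_eq by metis
  obtain a b where q: "q = (of_int a, of_int b, - of_int a - of_int b)" using qu(1) by (rule MlatE)
  have "u = u'"
    using q Wfin_six[OF qu(2)] Wfin_six[OF qu'(2)] w w' qu(3) qu'(3) \<open>q = q'\<close> Wup0_iff
    by (intro chamber_unique[of q a b u u']) auto
  then show ?thesis using qu qu' \<open>q = q'\<close> by simp
qed




definition Ui :: "nat \<Rightarrow> hs \<Rightarrow> hs" where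
  "Ui i = (if i = 1 then sref 1 \<circ> sref 2 else if i = 2 then sref 2 \<circ> sref 1 else id)"

lemma Ui_Wfin: "u \<in> Wfin \<Longrightarrow> Ui i \<circ> u \<in> Wfin"
  unfolding Ui_def by (auto simp: o_assoc[symmetric] Wfin_step)

lemma sig_tr: "q \<in> V0 \<Longrightarrow> sigmaA i \<circ> tr q = tr (omega i + Mrot i q) \<circ> Ui i"
proof -
  assume "q \<in> V0"
  then obtain a b where q: "q = (a, b, -a-b)" by (rule V0E)
  consider "i = 1" | "i = 2" | "i \<noteq> 1 \<and> i \<noteq> 2" by blast
  then show ?thesis
  proof cases
    case 1 then show ?thesis
      by (intro hs_ext) (simp add: q sigmaA_def omega_def Mrot_def Ui_def field_simps; simp add: algebra_simps)
  next
    case 2 then show ?thesis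
      by (intro hs_ext) (simp add: q sigmaA_def omega_def Mrot_def Ui_def field_simps; simp add: algebra_simps)
  next
    case 3 then show ?thesis
      by (intro hs_ext) (simp add: q sigmaA_def omega_def Mrot_def Ui_def field_simps; simp add: algebra_simps)
  qed
qed

lemma Ui_Lam0: "Ui i Lam0 = Lam0"
  by (simp add: Ui_def Lam0_eq)

lemma Mlat_Mrot: "q \<in> Mlat \<Longrightarrow> Mrot i q \<in> Mlat"
  by (cases q) (auto simp: Mlat_def Mrot_def split: if_splits)

lemma V0_omega: "omega i \<in> V0" by (simp add: omega_def V0_def)

lemma V0_x: "q \<in> Mlat \<Longrightarrow> omega i + Mrot i q \<in> V0"
  using V0_add V0_omega Mlat_V0 Mlat_Mrot by blast

lemma Mrot_inj: "Mrot i q = Mrot i q' \<Longrightarrow> q = q'"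
  by (cases q, cases q') (auto simp: Mrot_def split: if_splits)

lemma transl_Waff: "w \<in> Waff \<Longrightarrow> transl w \<in> Mlat \<and> (\<exists>u\<in>Wfin. w = tr (transl w) \<circ> u)"
  using decomp transl_eq by metis

lemma sig_Lam0: "w \<in> Waff \<Longrightarrow> (sigmaA i \<circ> w) Lam0 = tr (omega i + Mrot i (transl w)) Lam0"
proof -
  assume w: "w \<in> Waff"
  then obtain u where u: "u \<in> Wfin" "w = tr (transl w) \<circ> u" and q: "transl w \<in> Mlat"
    using transl_Waff by blast
  have "sigmaA i \<circ> w = tr (omega i + Mrot i (transl w)) \<circ> Ui i \<circ> u"
    using u sig_tr[OF Mlat_V0[OF q], of i] by (metis o_assoc)
  then show ?thesis using Ui_Lam0 Wfin_Lam0[OF u(1)] by simp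
qed

lemma fin_sig_Lam0: "w \<in> Waff \<Longrightarrow> fin ((sigmaA i \<circ> w) Lam0) = omega i + Mrot i (transl w)"
  using sig_Lam0 tr_Lam0 V0_x transl_Waff by metis

definition atlf :: "vec3 \<Rightarrow> real" where
  "atlf x = (case x of (x1, x2, x3) \<Rightarrow> - x1 + x3 + 3/2 * (x1*x1 + x2*x2 + x3*x3))"

lemma atl_tr: "x \<in> V0 \<Longrightarrow> pair_rho (Lam0 - tr x Lam0) = atlf x"
  by (erule V0E) (simp add: Lam0_eq pair_rho_def atlf_def field_simps; simp add: algebra_simps)

lemma atl_sig: "w \<in> Waff \<Longrightarrow> atl (sigmaA i \<circ> w) = atlf (omega i + Mrot i (transl w))"
  unfolding atl_def using sig_Lam0 atl_tr V0_x transl_Waff by metis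

lemma norm_pmap: "x \<in> V0 \<Longrightarrow> (fst (pmap x))^2 + 3 * (snd (pmap x))^2 = 12 * atlf x + 4"
  by (erule V0E) (simp add: pmap_def atlf_def power2_eq_square algebra_simps)

lemma Ohat_sig:
  assumes i: "i < 3" and w: "w \<in> Wup0"
  shows "Ohat (sigmaA i \<circ> w) = {pmap (omega i + Mrot i (transl w)), - pmap (omega i + Mrot i (transl w))}"
  unfolding Ohat_def
proof (rule the_equality)
  show "\<exists>j w'. j < 3 \<and> w' \<in> Wup0 \<and> sigmaA i \<circ> w = sigmaA j \<circ> w' \<and>
      {pmap (omega i + Mrot i (transl w)), - pmap (omega i + Mrot i (transl w))} =
      {pmap (omega j + Mrot j (transl w')), - pmap (omega j + Mrot j (transl w'))}"
    using i w by blast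
next
  fix S assume "\<exists>j w'. j < 3 \<and> w' \<in> Wup0 \<and> sigmaA i \<circ> w = sigmaA j \<circ> w' \<and>
      S = {pmap (omega j + Mrot j (transl w')), - pmap (omega j + Mrot j (transl w'))}"
  then obtain j w' where jw: "w' \<in> Wup0" "sigmaA i \<circ> w = sigmaA j \<circ> w'"
    "S = {pmap (omega j + Mrot j (transl w')), - pmap (omega j + Mrot j (transl w'))}" by blast
  have "omega i + Mrot i (transl w) = omega j + Mrot j (transl w')"
    using fin_sig_Lam0 jw w Wup0_iff by metis
  then show "S = {pmap (omega i + Mrot i (transl w)), - pmap (omega i + Mrot i (transl w))}"
    using jw by simp
qed

definition Pint :: "nat \<Rightarrow> int \<Rightarrow> int \<Rightarrow> int \<times> int" where
  "Pint i u v = (if i = 1 then (3 * u + 6 * v - 1, 3 * u + 1) else if i = 2 then (3 * u + 6 * v + 2, 3 * u) else (3 * u + 6 * v - 1, 3 * u - 1))"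

lemma pmap_Pint: "pmap (omega i + (of_int u, of_int v, - of_int u - of_int v)) =
   (of_int (fst (Pint i u v)), of_int (snd (Pint i u v)))"
  by (simp add: pmap_def omega_def Pint_def field_simps)

lemma Pint_inj: "i < 3 \<Longrightarrow> j < 3 \<Longrightarrow> Pint i u v = Pint j u' v' \<Longrightarrow> i = j \<and> u = u' \<and> v = v'"
  apply (cases "i = 0"; cases "i = 1"; cases "j = 0"; cases "j = 1")
  apply (simp_all add: Pint_def)
  apply presburger+
  done

lemma Pint_neg: "i < 3 \<Longrightarrow> j < 3 \<Longrightarrow> Pint i u v \<noteq> - Pint j u' v'"
  apply (cases "i = 0"; cases "i = 1"; cases "j = 0"; cases "j = 1")
  apply (simp_all add: Pint_def)
  apply presburger+
  done

lemma Pint_surj_aux: "m mod 2 = n mod 2 \<Longrightarrow> m mod 3 \<noteq> 0 \<Longrightarrow>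
  \<exists>u v::int. (m = 3 * u + 6 * v - 1 \<and> n = 3 * u - 1) \<or> (m = 3 * u + 6 * v - 1 \<and> n = 3 * u + 1) \<or> (m = 3 * u + 6 * v + 2 \<and> n = 3 * u)
    \<or> (-m = 3 * u + 6 * v - 1 \<and> -n = 3 * u - 1) \<or> (-m = 3 * u + 6 * v - 1 \<and> -n = 3 * u + 1) \<or> (-m = 3 * u + 6 * v + 2 \<and> -n = 3 * u)"
  for m n :: int
  by presburger

lemma exPint: "i < 3 \<Longrightarrow> (m,n) = Pint i u v \<or> (m,n) = - Pint i u v \<Longrightarrow> \<exists>i<3. \<exists>u v. (m, n) = Pint i u v \<or> (m, n) = - Pint i u v"
  by blast

lemma Pint_surj: "m mod 2 = n mod 2 \<Longrightarrow> m mod 3 \<noteq> 0 \<Longrightarrow>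
  \<exists>i<3. \<exists>u v. (m, n) = Pint i u v \<or> (m, n) = - Pint i u v"
proof -
  assume "m mod 2 = n mod 2" "m mod 3 \<noteq> 0"
  from Pint_surj_aux[OF this] obtain u v where uv: "(m = 3 * u + 6 * v - 1 \<and> n = 3 * u - 1) \<or> (m = 3 * u + 6 * v - 1 \<and> n = 3 * u + 1) \<or> (m = 3 * u + 6 * v + 2 \<and> n = 3 * u)
    \<or> (-m = 3 * u + 6 * v - 1 \<and> -n = 3 * u - 1) \<or> (-m = 3 * u + 6 * v - 1 \<and> -n = 3 * u + 1) \<or> (-m = 3 * u + 6 * v + 2 \<and> -n = 3 * u)" by blast
  then show ?thesis
  proof (elim disjE)
    assume "m = 3 * u + 6 * v - 1 \<and> n = 3 * u - 1" then show ?thesis by (intro exPint[of 0 _ _ u v]) (auto simp: Pint_def)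
  next
    assume "m = 3 * u + 6 * v - 1 \<and> n = 3 * u + 1" then show ?thesis by (intro exPint[of 1 _ _ u v]) (auto simp: Pint_def)
  next
    assume "m = 3 * u + 6 * v + 2 \<and> n = 3 * u" then show ?thesis by (intro exPint[of 2 _ _ u v]) (auto simp: Pint_def)
  next
    assume "-m = 3 * u + 6 * v - 1 \<and> -n = 3 * u - 1" then show ?thesis by (intro exPint[of 0 _ _ u v]) (auto simp: Pint_def)
  next
    assume "-m = 3 * u + 6 * v - 1 \<and> -n = 3 * u + 1" then show ?thesis by (intro exPint[of 1 _ _ u v]) (auto simp: Pint_def)
  next
    assume "-m = 3 * u + 6 * v + 2 \<and> -n = 3 * u" then show ?thesis by (intro exPint[of 2 _ _ u v]) (auto simp: Pint_def)
  qed
qed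

lemma nt_cond: "m^2 + 3 * n^2 = 12 * k + 4 \<Longrightarrow> m mod 2 = n mod 2 \<and> m mod 3 \<noteq> 0" for m n k :: int
proof
  assume h: "m^2 + 3 * n^2 = 12 * k + 4"
  have "even (m^2 + 3 * n^2)" using h by simp
  then have "even m \<longleftrightarrow> even n" by auto
  then show "m mod 2 = n mod 2" by presburger
  show "m mod 3 \<noteq> 0"
  proof
    assume "m mod 3 = 0"
    then obtain t where "m = 3 * t" by auto
    then have "3 * (3 * t^2 + n^2 - 4 * k) = 4" using h by (simp add: power2_eq_square algebra_simps)
    then have "(3::int) dvd 4" by (metis dvd_triv_left)
    then show False by simp
  qed
qed

definition rp :: "int \<times> int \<Rightarrow> real \<times> real" where "rp z = (of_int (fst z), of_int (snd z))"

lemma rp_inj: "rp a = rp b \<longleftrightarrow> a = b"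
  by (cases a, cases b) (simp add: rp_def)
lemma rp_neg: "rp (- a) = - rp a"
  by (cases a) (simp add: rp_def)
lemma rp_eq_neg: "rp a = - rp b \<longleftrightarrow> a = - b"
  by (simp add: rp_neg[symmetric] rp_inj)

lemma pmap_Pint': "pmap (omega i + (of_int u, of_int v, - of_int u - of_int v)) = rp (Pint i u v)"
  using pmap_Pint by (simp add: rp_def)

definition Minv :: "nat \<Rightarrow> vec3 \<Rightarrow> vec3" where
  "Minv i y = (case y of (y1, y2, y3) \<Rightarrow> (if i = 1 then (y2, y3, y1) else if i = 2 then (y3, y1, y2) else (y1, y2, y3)))"

lemma Mrot_Minv: "Mrot i (Minv i y) = y"
  by (cases y) (auto simp: Mrot_def Minv_def)

lemma Mlat_Minv: "y \<in> Mlat \<Longrightarrow> Minv i y \<in> Mlat"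
  by (cases y) (auto simp: Mlat_def Minv_def split: if_splits)

lemma x_repr: "q \<in> Mlat \<Longrightarrow> \<exists>u v. Mrot i q = (of_int u, of_int v, - of_int u - of_int v)"
  using Mlat_Mrot MlatE by metis

lemma Ucal_iff: "(X, Y) \<in> Ucal k \<longleftrightarrow> X \<in> \<int> \<and> Y \<in> \<int> \<and> X^2 + 3 * Y^2 = real k"
  by (simp add: Ucal_def)

lemma SigW0_iff: "v \<in> SigW0 \<longleftrightarrow> (\<exists>i w. i < 3 \<and> w \<in> Wup0 \<and> v = sigmaA i \<circ> w)"
  by (auto simp: SigW0_def)

lemma Bhat_sub: "(\<Union>v\<in>Bhat N. Ohat v) \<subseteq> Ucal (12 * N + 4)"
proof
  fix z assume "z \<in> (\<Union>v\<in>Bhat N. Ohat v)"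
  then obtain v where v: "v \<in> Bhat N" "z \<in> Ohat v" by blast
  then obtain i w where iw: "i < 3" "w \<in> Wup0" "v = sigmaA i \<circ> w" "atl v = real N"
    by (auto simp: Bhat_def SigW0_iff)
  have wW: "w \<in> Waff" using iw Wup0_iff by blast
  have qM: "transl w \<in> Mlat" using wW transl_Waff by blast
  obtain u v' where uv: "Mrot i (transl w) = (of_int u, of_int v', - of_int u - of_int v')" using x_repr[OF qM] by blast
  let ?x = "omega i + Mrot i (transl w)"
  have px: "pmap ?x = rp (Pint i u v')" using uv pmap_Pint' by simp
  have "atlf ?x = real N" using atl_sig wW iw by metis
  then have nrm: "(fst (pmap ?x))^2 + 3 * (snd (pmap ?x))^2 = 12 * real N + 4"
    using norm_pmap[OF V0_x[OF qM]] by simp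
  have "z = pmap ?x \<or> z = - pmap ?x" using v(2) Ohat_sig[OF iw(1,2)] iw(3) by auto
  then show "z \<in> Ucal (12 * N + 4)"
  proof
    assume "z = pmap ?x"
    then show ?thesis using nrm px by (cases z) (simp add: Ucal_iff rp_def)
  next
    assume "z = - pmap ?x"
    then show ?thesis using nrm px by (cases z) (simp add: Ucal_iff rp_def)
  qed
qed

lemma Ucal_sub: "Ucal (12 * N + 4) \<subseteq> (\<Union>v\<in>Bhat N. Ohat v)"
proof
  fix z assume z: "z \<in> Ucal (12 * N + 4)"
  obtain X Y where XY: "z = (X, Y)" by (cases z)
  then have "X \<in> \<int>" "Y \<in> \<int>" and e: "X^2 + 3 * Y^2 = real (12 * N + 4)" using z by (auto simp: Ucal_iff)
  then obtain m n where mn: "X = of_int m" "Y = of_int n" by (auto elim!: Ints_cases)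
  have "real_of_int (m^2 + 3 * n^2) = real_of_int (12 * int N + 4)" using e mn by simp
  then have "m^2 + 3 * n^2 = 12 * int N + 4" by (simp only: of_int_eq_iff)
  then have "m mod 2 = n mod 2 \<and> m mod 3 \<noteq> 0" by (rule nt_cond)
  then obtain i u v where iuv: "i < 3" "(m, n) = Pint i u v \<or> (m, n) = - Pint i u v"
    using Pint_surj by blast
  define y :: vec3 where "y = (of_int u, of_int v, - of_int u - of_int v)"
  have yM: "y \<in> Mlat" unfolding y_def by (rule Mlat_I) simp
  obtain w where w: "w \<in> Wup0" "transl w = Minv i y" using Wup0_exists Mlat_Minv[OF yM] by blast
  have wW: "w \<in> Waff" using w Wup0_iff by blast
  have My: "Mrot i (transl w) = y" using w Mrot_Minv by simp
  let ?x = "omega i + y"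
  have px: "pmap ?x = rp (Pint i u v)" unfolding y_def by (rule pmap_Pint')
  have zr: "z = rp (m, n)" using XY mn by (simp add: rp_def)
  have zx: "z = pmap ?x \<or> z = - pmap ?x"
    using iuv(2)
  proof
    assume "(m, n) = Pint i u v" then show ?thesis using zr px by simp
  next
    assume "(m, n) = - Pint i u v" then show ?thesis using zr px rp_neg by simp
  qed
  have "(fst (pmap ?x))^2 + 3 * (snd (pmap ?x))^2 = X^2 + 3 * Y^2"
    using zx XY by (cases "pmap ?x") auto
  then have "12 * atlf ?x + 4 = 12 * real N + 4" using norm_pmap[OF V0_add[OF V0_omega Mlat_V0[OF yM]]] e
    by simp
  then have "atlf ?x = real N" by simp
  then have "atl (sigmaA i \<circ> w) = real N" using atl_sig[OF wW, of i] My by simp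
  moreover have "sigmaA i \<circ> w \<in> SigW0" using iuv(1) w(1) SigW0_iff by blast
  ultimately have B: "sigmaA i \<circ> w \<in> Bhat N" by (simp add: Bhat_def)
  have "z \<in> Ohat (sigmaA i \<circ> w)" using Ohat_sig[OF iuv(1) w(1)] My zx by auto
  then show "z \<in> (\<Union>v\<in>Bhat N. Ohat v)" using B by blast
qed

lemma Bhat_elem:
  assumes "v \<in> Bhat N"
  obtains i w u u' where "i < 3" "w \<in> Wup0" "v = sigmaA i \<circ> w"
    "Mrot i (transl w) = (of_int u, of_int u', - of_int u - of_int u')"
    "Ohat v = {rp (Pint i u u'), - rp (Pint i u u')}"
proof -
  obtain i w where iw: "i < 3" "w \<in> Wup0" "v = sigmaA i \<circ> w"
    using assms by (auto simp: Bhat_def SigW0_iff)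
  have wW: "w \<in> Waff" using iw Wup0_iff by blast
  have qM: "transl w \<in> Mlat" using wW transl_Waff by blast
  obtain u u' where uv: "Mrot i (transl w) = (of_int u, of_int u', - of_int u - of_int u')" using x_repr[OF qM] by blast
  have "Ohat v = {rp (Pint i u u'), - rp (Pint i u u')}"
    using Ohat_sig[OF iw(1,2)] iw(3) uv pmap_Pint' by simp
  then show ?thesis using that iw uv by blast
qed

lemma Bhat_disj: "disjoint_family_on Ohat (Bhat N)"
  unfolding disjoint_family_on_def
proof (intro ballI impI)
  fix v1 v2 assume v1: "v1 \<in> Bhat N" and v2: "v2 \<in> Bhat N" and ne: "v1 \<noteq> v2"
  obtain i1 w1 u1 u1' where a: "i1 < 3" "w1 \<in> Wup0" "v1 = sigmaA i1 \<circ> w1"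
    "Mrot i1 (transl w1) = (of_int u1, of_int u1', - of_int u1 - of_int u1')"
    "Ohat v1 = {rp (Pint i1 u1 u1'), - rp (Pint i1 u1 u1')}" using v1 by (rule Bhat_elem)
  obtain i2 w2 u2 u2' where b: "i2 < 3" "w2 \<in> Wup0" "v2 = sigmaA i2 \<circ> w2"
    "Mrot i2 (transl w2) = (of_int u2, of_int u2', - of_int u2 - of_int u2')"
    "Ohat v2 = {rp (Pint i2 u2 u2'), - rp (Pint i2 u2 u2')}" using v2 by (rule Bhat_elem)
  show "Ohat v1 \<inter> Ohat v2 = {}"
  proof (rule ccontr)
    assume "Ohat v1 \<inter> Ohat v2 \<noteq> {}"
    then have "rp (Pint i1 u1 u1') = rp (Pint i2 u2 u2') \<or> rp (Pint i1 u1 u1') = - rp (Pint i2 u2 u2')"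
      using a(5) b(5) by auto
    then have "Pint i1 u1 u1' = Pint i2 u2 u2' \<or> Pint i1 u1 u1' = - Pint i2 u2 u2'"
      by (simp add: rp_inj rp_eq_neg)
    then have "Pint i1 u1 u1' = Pint i2 u2 u2'" using Pint_neg a(1) b(1) by blast
    then have e: "i1 = i2" "u1 = u2" "u1' = u2'" using Pint_inj a(1) b(1) by blast+
    then have "Mrot i1 (transl w1) = Mrot i1 (transl w2)" using a(4) b(4) by simp
    then have "transl w1 = transl w2" by (rule Mrot_inj)
    then have "w1 = w2" using Wup0_unique a(2) b(2) by blast
    then show False using ne a(3) b(3) e by simp
  qed
qed

lemma part1:
  assumes w: "w \<in> Wup0"
  shows "Ocal w = (\<Union>i\<in>{0, 1, 2::nat}. Ohat (sigmaA i \<circ> w))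
         \<and> disjoint_family_on (\<lambda>i. Ohat (sigmaA i \<circ> w)) {0, 1, 2::nat}"
proof -
  have wW: "w \<in> Waff" using w Wup0_iff by blast
  have qM: "transl w \<in> Mlat" using transl_Waff wW by blast
  obtain A B where qAB: "transl w = (of_int A, of_int B, - of_int A - of_int B)" using qM by (rule MlatE)
  define P0 where "P0 = rp (3*A+6*B-1, 3*A-1)"
  define P1 where "P1 = rp (-3*A+3*B+1, 3*A+3*B-1)"
  define P2 where "P2 = rp (-6*A-3*B+2, 3*B)"
  have pm0: "pmap (omega 0 + Mrot 0 (transl w)) = P0"
    by (simp add: qAB P0_def rp_def pmap_def omega_def Mrot_def field_simps)
  have pm1: "pmap (omega 1 + Mrot 1 (transl w)) = - P1"
    by (simp add: qAB P1_def rp_def pmap_def omega_def Mrot_def field_simps)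
  have pm2: "pmap (omega 2 + Mrot 2 (transl w)) = P2"
    by (simp add: qAB P2_def rp_def pmap_def omega_def Mrot_def field_simps)
  have pq: "pmap (transl w) = P0"
    by (simp add: qAB P0_def rp_def pmap_def field_simps)
  have R0: "Rmat P0 = P1" by (simp add: P0_def P1_def rp_def Rmat_def field_simps)
  have R1: "Rmat P1 = P2" by (simp add: P1_def P2_def rp_def Rmat_def field_simps)
  have R2: "Rmat P2 = - P0" by (simp add: P0_def P2_def rp_def Rmat_def field_simps)
  have Rn: "Rmat (- x) = - Rmat x" for x by (cases x) (simp add: Rmat_def field_simps)
  have O0: "Ohat (sigmaA 0 \<circ> w) = {P0, -P0}" using Ohat_sig[of 0 w] w pm0 by simp
  have O1: "Ohat (sigmaA 1 \<circ> w) = {P1, -P1}" using Ohat_sig[of 1 w] w pm1 by auto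
  have O2: "Ohat (sigmaA 2 \<circ> w) = {P2, -P2}" using Ohat_sig[of 2 w] w pm2 by simp
  have pw: "(Rmat ^^ 1) P0 = P1" "(Rmat ^^ 2) P0 = P2" "(Rmat ^^ 3) P0 = - P0"
    "(Rmat ^^ 4) P0 = - P1" "(Rmat ^^ 5) P0 = - P2" "(Rmat ^^ 6) P0 = P0"
    by (simp_all add: numeral_eq_Suc R0 R1 R2 Rn)
  have ks: "{1..6::nat} = {1,2,3,4,5,6}" by auto
  have "Ocal w = (\<lambda>k. (Rmat ^^ k) P0) ` {1,2,3,4,5,6}"
    unfolding Ocal_def pq ks by blast
  also have "\<dots> = {(Rmat ^^ 1) P0, (Rmat ^^ 2) P0, (Rmat ^^ 3) P0, (Rmat ^^ 4) P0, (Rmat ^^ 5) P0, (Rmat ^^ 6) P0}"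
    by (simp only: image_insert image_empty)
  finally have Oc: "Ocal w = {P1, P2, -P0, -P1, -P2, P0}" by (simp only: pw)
  have U: "(\<Union>i\<in>{0, 1, 2::nat}. Ohat (sigmaA i \<circ> w)) = Ohat (sigmaA 0 \<circ> w) \<union> Ohat (sigmaA 1 \<circ> w) \<union> Ohat (sigmaA 2 \<circ> w)"
    by auto
  have di: "(3*A+6*B-1, 3*A-1) \<noteq> ((-3*A+3*B+1, 3*A+3*B-1)::int\<times>int)"
    "(3*A+6*B-1, 3*A-1) \<noteq> - ((-3*A+3*B+1, 3*A+3*B-1)::int\<times>int)"
    "(3*A+6*B-1, 3*A-1) \<noteq> ((-6*A-3*B+2, 3*B)::int\<times>int)"
    "(3*A+6*B-1, 3*A-1) \<noteq> - ((-6*A-3*B+2, 3*B)::int\<times>int)"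
    "(-3*A+3*B+1, 3*A+3*B-1) \<noteq> ((-6*A-3*B+2, 3*B)::int\<times>int)"
    "(-3*A+3*B+1, 3*A+3*B-1) \<noteq> - ((-6*A-3*B+2, 3*B)::int\<times>int)"
    by (simp, presburger)+
  have d: "P0 \<noteq> P1" "P0 \<noteq> -P1" "P0 \<noteq> P2" "P0 \<noteq> -P2" "P1 \<noteq> P2" "P1 \<noteq> -P2"
    unfolding P0_def P1_def P2_def rp_neg[symmetric] rp_inj using di by blast+
  have d2: "-P0 \<noteq> P1" "-P0 \<noteq> -P1" "-P0 \<noteq> P2" "-P0 \<noteq> -P2" "-P1 \<noteq> P2" "-P1 \<noteq> -P2"
    using d by (metis minus_minus)+
  have part_a: "Ocal w = (\<Union>i\<in>{0, 1, 2::nat}. Ohat (sigmaA i \<circ> w))"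
    unfolding U O0 O1 O2 Oc by blast
  have E: "{P0, -P0} \<inter> {P1, -P1} = {}" "{P0, -P0} \<inter> {P2, -P2} = {}" "{P1, -P1} \<inter> {P2, -P2} = {}"
    using d d2 by blast+
  have F: "Ohat (sigmaA 0 \<circ> w) \<inter> Ohat (sigmaA 1 \<circ> w) = {}"
    "Ohat (sigmaA 0 \<circ> w) \<inter> Ohat (sigmaA 2 \<circ> w) = {}"
    "Ohat (sigmaA 1 \<circ> w) \<inter> Ohat (sigmaA 2 \<circ> w) = {}"
    unfolding O0 O1 O2 using E by blast+
  have part_b: "disjoint_family_on (\<lambda>i. Ohat (sigmaA i \<circ> w)) {0, 1, 2::nat}"
    unfolding disjoint_family_on_def
  proof (intro ballI impI)
    fix i j :: nat assume ij: "i \<in> {0,1,2}" "j \<in> {0,1,2}" "i \<noteq> j"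
    then consider "i = 0" "j = 1" | "i = 0" "j = 2" | "i = 1" "j = 2" | "i = 1" "j = 0" | "i = 2" "j = 0" | "i = 2" "j = 1"
      by auto
    then show "Ohat (sigmaA i \<circ> w) \<inter> Ohat (sigmaA j \<circ> w) = {}"
      by cases (use F in \<open>simp_all only: Int_commute\<close>)
  qed
  show ?thesis using part_a part_b by blast
qed

theorem theorem8p6:
  fixes N :: nat and w :: "hs \<Rightarrow> hs"
  assumes "w \<in> Wup0" and "atl w = real N"
  shows "Ocal w = (\<Union>i\<in>{0, 1, 2::nat}. Ohat (sigmaA i \<circ> w))
         \<and> disjoint_family_on (\<lambda>i. Ohat (sigmaA i \<circ> w)) {0, 1, 2::nat}
         \<and> Ucal (12 * N + 4) = (\<Union>v\<in>Bhat N. Ohat v)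
         \<and> disjoint_family_on Ohat (Bhat N)"
  using part1[OF assms(1)] Bhat_sub[of N] Ucal_sub[of N] Bhat_disj[of N] by blast


end
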